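(* Consider the Probabilistic Serial mechanism with $n$ agents and $m \le n$ items. Agent 1 has a strict linear order $\succ_1$ over the items; let $\overline{O}$ be the set of its $k$ most preferred items under $\succ_1$ ($1 \le k \le m$). Fix arbitrary reported strict linear orders of agents $2,\dots,n$, and consider the truthful run in which agent 1 reports $\succ_1$. Let $T$ be the time at which the last item of $\overline{O}$ is exhausted in this run, and suppose $\tfrac12 \le T < \tfrac23$. Suppose there is an item $o^* \in \overline{O}$ of which agent 1 receives a positive amount such that, at the moment $o^*$ is exhausted, the agents eating $o^*$ are exactly agent 1 and one other agent, called agent 2. Let $t_1$ be the time at which agent 1 starts eating $o^*$ and $t_1+t_2$ the time at which $o^*$ is exhausted, and let $O_3$ be the set of items exhausted during the time interval $(t_1+t_2, T]$ in the truthful run. Then for every item in $O_3$, at the moment it is exhausted in the truthful run, there are at least two agents other than agents 1 and 2 eating it.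
   Context: Probabilistic Serial: there are $n$ agents and $m$ divisible items of unit supply; each agent reports a strict linear order over all items. Starting at time $0$, every agent consumes at rate $1$ per unit time its most preferred item (according to its report) among those with positive remaining supply; when an item is exhausted, agents consuming it move to their most preferred item still available; this continues until all items are exhausted. *)

theory Defs
  imports Complex_Main
begin

text \<open>Preferences: P i is a list of all items, most preferred first
  (a strict linear order). The run is simulated phase by phase: within a phase,
  every agent eats its most preferred remaining item; the phase ends when the
  first of the eaten items is exhausted.\<close>

definition strict_order_on :: "'a set \<Rightarrow> 'a list \<Rightarrow> bool" where
  "strict_order_on Items l \<longleftrightarrow> distinct l \<and> set l = Items"

definition top_item :: "(nat \<Rightarrow> 'a list) \<Rightarrow> nat \<Rightarrow> 'a set \<Rightarrow> 'a" where
  "top_item P i R = hd (filter (\<lambda>y. y \<in> R) (P i))"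

definition eat_rate :: "nat set \<Rightarrow> (nat \<Rightarrow> 'a list) \<Rightarrow> 'a set \<Rightarrow> 'a \<Rightarrow> real" where
  "eat_rate A P R x = real (card {i \<in> A. top_item P i R = x})"

text \<open>State: (current time, remaining items, remaining supply).\<close>
type_synonym 'a ps_state = "real \<times> 'a set \<times> ('a \<Rightarrow> real)"

definition ps_step :: "nat set \<Rightarrow> (nat \<Rightarrow> 'a list) \<Rightarrow> 'a ps_state \<Rightarrow> 'a ps_state" where
  "ps_step A P st =
     (let (t, R, s) = st in
      if R = {} then st else
      let Eaten = (\<lambda>i. top_item P i R) ` A;
          d = Min ((\<lambda>x. s x / eat_rate A P R x) ` Eaten)
      in (t + d,
          R - {x \<in> Eaten. s x / eat_rate A P R x = d},
          (\<lambda>x. s x - eat_rate A P R x * d)))"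

primrec ps_state :: "nat set \<Rightarrow> (nat \<Rightarrow> 'a list) \<Rightarrow> 'a set \<Rightarrow> nat \<Rightarrow> 'a ps_state" where
  "ps_state A P Items 0 = (0, Items, (\<lambda>_. 1))"
| "ps_state A P Items (Suc k) = ps_step A P (ps_state A P Items k)"

definition ps_time :: "nat set \<Rightarrow> (nat \<Rightarrow> 'a list) \<Rightarrow> 'a set \<Rightarrow> nat \<Rightarrow> real" where
  "ps_time A P Items k = fst (ps_state A P Items k)"

definition ps_remaining :: "nat set \<Rightarrow> (nat \<Rightarrow> 'a list) \<Rightarrow> 'a set \<Rightarrow> nat \<Rightarrow> 'a set" where
  "ps_remaining A P Items k = fst (snd (ps_state A P Items k))"

definition exh_phase :: "nat set \<Rightarrow> (nat \<Rightarrow> 'a list) \<Rightarrow> 'a set \<Rightarrow> 'a \<Rightarrow> nat" where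
  "exh_phase A P Items x = (LEAST k. x \<notin> ps_remaining A P Items (Suc k))"

definition exh_time :: "nat set \<Rightarrow> (nat \<Rightarrow> 'a list) \<Rightarrow> 'a set \<Rightarrow> 'a \<Rightarrow> real" where
  "exh_time A P Items x = ps_time A P Items (Suc (exh_phase A P Items x))"

definition eaters_at_exh :: "nat set \<Rightarrow> (nat \<Rightarrow> 'a list) \<Rightarrow> 'a set \<Rightarrow> 'a \<Rightarrow> nat set" where
  "eaters_at_exh A P Items x =
     {i \<in> A. top_item P i (ps_remaining A P Items (exh_phase A P Items x)) = x}"

text \<open>Agent i eats item x during some phase (equivalently: receives a positive amount of x,
  since every phase has positive length).\<close>
definition eats_some :: "nat set \<Rightarrow> (nat \<Rightarrow> 'a list) \<Rightarrow> 'a set \<Rightarrow> nat \<Rightarrow> 'a \<Rightarrow> bool" where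
  "eats_some A P Items i x \<longleftrightarrow>
     (\<exists>k. x \<in> ps_remaining A P Items k \<and> top_item P i (ps_remaining A P Items k) = x)"

definition start_time :: "nat set \<Rightarrow> (nat \<Rightarrow> 'a list) \<Rightarrow> 'a set \<Rightarrow> nat \<Rightarrow> 'a \<Rightarrow> real" where
  "start_time A P Items i x =
     ps_time A P Items (LEAST k. x \<in> ps_remaining A P Items k \<and>
                               top_item P i (ps_remaining A P Items k) = x)"

end

theory Submission
  imports Defs
begin

lemma hd_filter_mono:
  assumes "Q' x" "x \<in> set l" "\<And>y. Q' y \<Longrightarrow> Q y" "hd (filter Q l) = x"
  shows "hd (filter Q' l) = x"
  using assms
proof (induction l)
  case Nil then show ?case by simp
next
  case (Cons y ys)
  show ?case
  proof (cases "Q y")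
    case True
    then have "y = x" using Cons.prems by simp
    then show ?thesis using Cons.prems by simp
  next
    case False
    then have "\<not> Q' y" using Cons.prems by blast
    moreover have "x \<noteq> y" using False Cons.prems by blast
    ultimately show ?thesis using Cons False by simp
  qed
qed

locale psl =
  fixes A :: "nat set" and P :: "nat \<Rightarrow> 'a list" and Items :: "'a set"
  assumes finA: "finite A" and neA: "A \<noteq> {}" and finI: "finite Items"
    and prefs: "\<forall>i \<in> A. strict_order_on Items (P i)"
begin

definition "R k = ps_remaining A P Items k"
definition "tau k = ps_time A P Items k"
definition "s k = snd (snd (ps_state A P Items k))"
definition "tp k i = top_item P i (R k)"
definition "rate k x = eat_rate A P (R k) x"
definition "dd k = tau (Suc k) - tau k"
definition "Eaten k = (\<lambda>i. tp k i) ` A"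
definition "D k = Min ((\<lambda>x. s k x / rate k x) ` Eaten k)"

lemma state_eq: "ps_state A P Items k = (tau k, R k, s k)"
  by (simp add: tau_def R_def s_def ps_time_def ps_remaining_def)

lemma step_empty:
  assumes "R k = {}"
  shows "tau (Suc k) = tau k" "R (Suc k) = {}" "s (Suc k) = s k"
  using assms state_eq[of k] state_eq[of "Suc k"]
  by (auto simp: ps_step_def)

lemma step_ne:
  assumes "R k \<noteq> {}"
  shows "tau (Suc k) = tau k + D k"
    "R (Suc k) = R k - {x \<in> Eaten k. s k x / rate k x = D k}"
    "s (Suc k) = (\<lambda>x. s k x - rate k x * D k)"
  using assms state_eq[of k] state_eq[of "Suc k"]
  by (auto simp: ps_step_def D_def Eaten_def rate_def tp_def Let_def)

lemma top_in:
  assumes "R' \<noteq> {}" "R' \<subseteq> Items" "i \<in> A"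
  shows "top_item P i R' \<in> R'"
proof -
  have "set (P i) = Items" using prefs assms(3) by (auto simp: strict_order_on_def)
  then have "filter (\<lambda>y. y \<in> R') (P i) \<noteq> []" using assms
    by (auto simp: filter_empty_conv)
  then have "hd (filter (\<lambda>y. y \<in> R') (P i)) \<in> set (filter (\<lambda>y. y \<in> R') (P i))"
    by (rule hd_in_set)
  then show ?thesis by (simp add: top_item_def)
qed

lemma top_mono:
  assumes "i \<in> A" "R' \<subseteq> R''" "R'' \<subseteq> Items" "x \<in> R'" "top_item P i R'' = x"
  shows "top_item P i R' = x"
proof -
  have "set (P i) = Items" using prefs assms(1) by (auto simp: strict_order_on_def)
  then have "x \<in> set (P i)" using assms by blast
  moreover have "hd (filter (\<lambda>y. y \<in> R'') (P i)) = x" using assms(5) by (simp add: top_item_def)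
  ultimately have "hd (filter (\<lambda>y. y \<in> R') (P i)) = x"
    using hd_filter_mono[of "\<lambda>y. y \<in> R'" x "P i" "\<lambda>y. y \<in> R''"] assms(2,4) by blast
  then show ?thesis by (simp add: top_item_def)
qed

lemma R_sub: "R (Suc k) \<subseteq> R k"
  by (cases "R k = {}") (auto simp: step_empty step_ne)

lemma R_anti: "j \<le> j' \<Longrightarrow> R j' \<subseteq> R j"
  by (induction j' rule: dec_induct) (use R_sub in auto)

lemma R0: "R 0 = Items" and s0: "s 0 = (\<lambda>_. 1)" and tau0: "tau 0 = 0"
  using state_eq[of 0] by auto

lemma R_Items: "R k \<subseteq> Items"
  using R_anti[of 0 k] R0 by auto

lemma rate_pos:
  assumes "x \<in> Eaten k" shows "rate k x > 0"
proof -
  obtain i where "i \<in> A" "tp k i = x" using assms by (auto simp: Eaten_def)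
  then have "{i \<in> A. top_item P i (R k) = x} \<noteq> {}" by (auto simp: tp_def)
  moreover have "finite {i \<in> A. top_item P i (R k) = x}" using finA by simp
  ultimately show ?thesis by (simp add: rate_def eat_rate_def card_gt_0_iff)
qed

lemma rate_zero:
  assumes "x \<notin> Eaten k" shows "rate k x = 0"
proof -
  have "{i \<in> A. top_item P i (R k) = x} = {}" using assms by (auto simp: Eaten_def tp_def)
  then show ?thesis unfolding rate_def eat_rate_def by (metis card.empty of_nat_0)
qed

lemma Eaten_sub: "R k \<noteq> {} \<Longrightarrow> Eaten k \<subseteq> R k"
  using top_in R_Items by (auto simp: Eaten_def tp_def)

lemma finE: "finite (Eaten k)" using finA by (simp add: Eaten_def)
lemma neE: "Eaten k \<noteq> {}" using neA by (simp add: Eaten_def)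

lemma s_pos: "x \<in> R k \<Longrightarrow> 0 < s k x"
proof (induction k arbitrary: x)
  case 0 then show ?case by (simp add: s0)
next
  case (Suc k)
  have ne: "R k \<noteq> {}" using Suc.prems R_sub by blast
  have xR: "x \<in> R k" using Suc.prems R_sub by blast
  show ?case
  proof (cases "x \<in> Eaten k")
    case False
    then show ?thesis using Suc.IH[OF xR] by (simp add: step_ne[OF ne] rate_zero)
  next
    case True
    have "D k \<le> s k x / rate k x" unfolding D_def using True finE by simp
    moreover have "D k \<noteq> s k x / rate k x" using Suc.prems True by (simp add: step_ne[OF ne])
    ultimately have "D k < s k x / rate k x" by simp
    then have "rate k x * D k < s k x" using rate_pos[OF True]
      by (simp add: field_simps)
    then show ?thesis by (simp add: step_ne[OF ne])
  qed
qed

lemma D_pos: assumes "R k \<noteq> {}" shows "0 < D k"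
proof -
  have "\<forall>y \<in> (\<lambda>x. s k x / rate k x) ` Eaten k. 0 < y"
    using Eaten_sub[OF assms] s_pos rate_pos by auto
  then show ?thesis unfolding D_def using finE neE by simp
qed

lemma dd_nonneg: "0 \<le> dd k"
  using D_pos by (cases "R k = {}") (auto simp: dd_def step_empty step_ne less_imp_le)

lemma dd_eq: "R k \<noteq> {} \<Longrightarrow> dd k = D k"
  by (simp add: dd_def step_ne)

lemma tau_mono: "j \<le> j' \<Longrightarrow> tau j \<le> tau j'"
  by (induction j' rule: dec_induct) (use dd_nonneg[unfolded dd_def] order_trans in fastforce)+


lemma s_eq: "s k x = 1 - (\<Sum>j<k. rate j x * dd j)"
proof (induction k)
  case 0 then show ?case by (simp add: s0)
next
  case (Suc k)
  show ?case
  proof (cases "R k = {}")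
    case True
    then have "dd k = 0" by (simp add: dd_def step_empty)
    then show ?thesis using Suc True by (simp add: step_empty)
  next
    case False
    then show ?thesis using Suc by (simp add: step_ne dd_eq)
  qed
qed

lemma R_shrink: assumes "R k \<noteq> {}" shows "card (R (Suc k)) < card (R k)"
proof -
  have "D k \<in> (\<lambda>x. s k x / rate k x) ` Eaten k" unfolding D_def using finE neE by simp
  then obtain y where y: "y \<in> Eaten k" "s k y / rate k y = D k" by auto
  then have "y \<in> R k" "y \<notin> R (Suc k)" using Eaten_sub[OF assms] by (auto simp: step_ne[OF assms])
  then have "R (Suc k) \<subset> R k" using R_sub by blast
  moreover have "finite (R k)" using R_Items finI finite_subset by blast
  ultimately show ?thesis by (rule psubset_card_mono[rotated])
qed

lemma R_card: "card (R k) \<le> card Items - k"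
proof (induction k)
  case 0 then show ?case by (simp add: R0)
next
  case (Suc k)
  show ?case
  proof (cases "R k = {}")
    case True then show ?thesis by (simp add: step_empty)
  next
    case False then show ?thesis using Suc R_shrink[OF False] by linarith
  qed
qed

lemma R_end: "R (card Items) = {}"
proof -
  have "finite (R (card Items))" using R_Items finI finite_subset by blast
  then show ?thesis using R_card[of "card Items"] by simp
qed

lemma exh_phase_eq: "exh_phase A P Items x = (LEAST k. x \<notin> R (Suc k))"
  by (simp add: exh_phase_def R_def)

lemma exh_props:
  assumes "x \<in> Items"
  shows "x \<notin> R (Suc (exh_phase A P Items x))" "x \<in> R (exh_phase A P Items x)"
proof -
  let ?e = "exh_phase A P Items x"
  have ex: "\<exists>k. x \<notin> R (Suc k)" using R_end R_sub by blast
  show "x \<notin> R (Suc ?e)" unfolding exh_phase_eq by (rule LeastI_ex[OF ex])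
  show "x \<in> R ?e"
  proof (cases ?e)
    case 0 then show ?thesis using assms R0 by simp
  next
    case (Suc e')
    then have "e' < (LEAST k. x \<notin> R (Suc k))" by (simp add: exh_phase_eq)
    then have "\<not> x \<notin> R (Suc e')" by (rule not_less_Least)
    then show ?thesis using Suc by simp
  qed
qed

lemma exhaust:
  assumes "x \<in> R e" "x \<notin> R (Suc e)"
  shows "s e x = rate e x * dd e"
proof -
  have ne: "R e \<noteq> {}" using assms by auto
  have xE: "x \<in> Eaten e" "s e x / rate e x = D e" using assms by (auto simp: step_ne[OF ne])
  then show ?thesis using rate_pos[OF xE(1)] dd_eq[OF ne] by (simp add: field_simps)
qed

lemma rate_sum: "rate j x * dd j = (\<Sum>i\<in>A. if tp j i = x then dd j else 0)"
proof -
  have "(\<Sum>i\<in>A. if tp j i = x then dd j else 0) = (\<Sum>i\<in>{i\<in>A. tp j i = x}. dd j)"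
    using sum.inter_filter[OF finA, of "\<lambda>_. dd j" "\<lambda>i. tp j i = x"] by simp
  also have "\<dots> = real (card {i\<in>A. tp j i = x}) * dd j" by simp
  finally show ?thesis by (simp add: rate_def eat_rate_def tp_def)
qed

definition "g x e i = (\<Sum>j<Suc e. if tp j i = x then dd j else 0)"

lemma decomp:
  assumes "x \<in> R e" "x \<notin> R (Suc e)"
  shows "1 = (\<Sum>i\<in>{i\<in>A. tp e i = x}. g x e i)"
proof -
  have "1 = (\<Sum>j<Suc e. rate j x * dd j)"
    using s_eq[of e x] exhaust[OF assms] by simp
  also have "\<dots> = (\<Sum>j<Suc e. \<Sum>i\<in>A. if tp j i = x then dd j else 0)"
    by (simp add: rate_sum)
  also have "\<dots> = (\<Sum>i\<in>A. g x e i)" unfolding g_def by (rule sum.swap)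
  also have "\<dots> = (\<Sum>i\<in>{i\<in>A. tp e i = x}. g x e i)"
  proof (rule sum.mono_neutral_cong_right[OF finA])
    show "{i\<in>A. tp e i = x} \<subseteq> A" by auto
    show "\<forall>i\<in>A - {i \<in> A. tp e i = x}. g x e i = 0"
    proof
      fix i assume i: "i \<in> A - {i \<in> A. tp e i = x}"
      have "(if tp j i = x then dd j else 0) = 0" if "j \<in> {..<Suc e}" for j
      proof (cases "tp j i = x")
        case True
        have "tp e i = x" unfolding tp_def
          using top_mono[of i "R e" "R j" x] i True that R_anti[of j e] R_Items assms(1)
          by (auto simp: tp_def)
        then show ?thesis using i by simp
      qed simp
      then show "g x e i = 0" unfolding g_def by simp
    qed
  qed simp
  finally show ?thesis .
qed

lemma g_le: "g x e i \<le> tau (Suc e)"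
proof -
  have "g x e i \<le> (\<Sum>j<Suc e. dd j)" unfolding g_def
    by (rule sum_mono) (simp add: dd_nonneg)
  also have "\<dots> = tau (Suc e)" unfolding dd_def by (simp add: sum_lessThan_telescope tau0)
  finally show ?thesis .
qed

lemma g_nonneg: "0 \<le> g x e i"
  unfolding g_def by (rule sum_nonneg) (simp add: dd_nonneg)

lemma g_le2:
  assumes "i \<in> A" "e0 < e" "x \<in> R e" "tp e0 i \<noteq> x"
  shows "g x e i \<le> tau (Suc e) - tau (Suc e0)"
proof -
  let ?f = "\<lambda>j. if tp j i = x then dd j else 0"
  have z: "?f j = 0" if "j < Suc e0" for j
  proof (cases "tp j i = x")
    case True
    have "tp e0 i = x" unfolding tp_def
      using top_mono[of i "R e0" "R j" x] assms True that R_anti[of j e0] R_anti[of e0 e] R_Items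
      by (auto simp: tp_def)
    then show ?thesis using assms by simp
  qed simp
  have "g x e i = sum ?f {0..<Suc e}" unfolding g_def by (simp add: atLeast0LessThan)
  also have "\<dots> = sum ?f {0..<Suc e0} + sum ?f {Suc e0..<Suc e}"
    using assms(2) by (intro sum.atLeastLessThan_concat[symmetric]) auto
  also have "sum ?f {0..<Suc e0} = 0" using z by simp
  also have "sum ?f {Suc e0..<Suc e} \<le> sum dd {Suc e0..<Suc e}"
    by (rule sum_mono) (simp add: dd_nonneg)
  also have "\<dots> = tau (Suc e) - tau (Suc e0)" unfolding dd_def
    using assms(2) by (simp add: sum_Suc_diff')
  finally show ?thesis by simp
qed


lemma main_loc:
  fixes ostar :: 'a and a2 :: nat and T t :: real
  assumes eaters: "eaters_at_exh A P Items ostar = {1, a2}"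
    and oI: "ostar \<in> Items"
    and t2_def: "t = exh_time A P Items ostar"
    and T_bounds: "T < 2/3"
  shows "\<forall>x \<in> Items. t < exh_time A P Items x \<and> exh_time A P Items x \<le> T
           \<longrightarrow> card (eaters_at_exh A P Items x - {1, a2}) \<ge> 2"
proof -
  define es where "es = exh_phase A P Items ostar"
  have ts: "tau (Suc es) = t" using t2_def unfolding exh_time_def es_def tau_def by simp
  have eat_eq: "eaters_at_exh A P Items y = {i\<in>A. tp (exh_phase A P Items y) i = y}" for y
    unfolding eaters_at_exh_def tp_def R_def by simp
  have Es: "{i\<in>A. tp es i = ostar} = {1, a2}" using eaters eat_eq[of ostar] by (simp add: es_def)
  have "1 = (\<Sum>i\<in>{1,a2}. g ostar es i)"
    using decomp[of ostar es] exh_props[OF oI] Es by (simp add: es_def)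
  also have "\<dots> \<le> real (card {1,a2}) * tau (Suc es)"
    by (rule sum_bounded_above) (rule g_le)
  also have "\<dots> \<le> 2 * tau (Suc es)"
  proof -
    have "card {1,a2} \<le> (2::nat)" by (simp add: card_insert_if)
    moreover have "0 \<le> tau (Suc es)" using tau_mono[of 0 "Suc es"] tau0 by simp
    ultimately show ?thesis by (simp add: mult_right_mono)
  qed
  finally have half: "1 \<le> 2 * tau (Suc es)" .
  show ?thesis
  proof (intro ballI impI)
    fix x assume x: "x \<in> Items" and tx: "t < exh_time A P Items x \<and> exh_time A P Items x \<le> T"
    define e where "e = exh_phase A P Items x"
    have te: "tau (Suc e) = exh_time A P Items x" unfolding exh_time_def e_def tau_def by simp
    have "es < e"
    proof (rule ccontr)
      assume "\<not> es < e"
      then have "tau (Suc e) \<le> tau (Suc es)" by (intro tau_mono) simp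
      then show False using tx te ts by simp
    qed
    have xe: "x \<in> R e" "x \<notin> R (Suc e)" using exh_props[OF x] by (simp_all add: e_def)
    have "x \<in> R (Suc es)" using xe(1) R_anti[of "Suc es" e] \<open>es < e\<close> by auto
    then have "x \<noteq> ostar" using exh_props(1)[OF oI] by (auto simp: es_def)
    then have tpo: "tp es i \<noteq> x" if "i \<in> {1,a2}" for i using Es that by blast
    define E where "E = {i\<in>A. tp e i = x}"
    have finEE: "finite E" using finA by (simp add: E_def)
    show "card (eaters_at_exh A P Items x - {1, a2}) \<ge> 2"
    proof (rule ccontr)
      assume "\<not> ?thesis"
      then have c1: "card (E - {1,a2}) \<le> 1" using eat_eq[of x] by (simp add: E_def e_def)
      have tpos: "0 \<le> tau (Suc e)" using tau_mono[of 0 "Suc e"] tau0 by simp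
      have dpos: "0 \<le> tau (Suc e) - tau (Suc es)" using tau_mono[of "Suc es" "Suc e"] \<open>es < e\<close> by simp
      have "1 = (\<Sum>i\<in>E. g x e i)" using decomp[OF xe] by (simp add: E_def)
      also have "\<dots> = (\<Sum>i\<in>E - E \<inter> {1,a2}. g x e i) + (\<Sum>i\<in>E \<inter> {1,a2}. g x e i)"
        by (rule sum.subset_diff) (use finEE in auto)
      also have "E - E \<inter> {1,a2} = E - {1,a2}" by auto
      also have "(\<Sum>i\<in>E - {1,a2}. g x e i) \<le> real (card (E - {1,a2})) * tau (Suc e)"
        by (rule sum_bounded_above) (rule g_le)
      also have "\<dots> \<le> 1 * tau (Suc e)" using c1 tpos by (intro mult_right_mono) auto
      also have "(\<Sum>i\<in>E \<inter> {1,a2}. g x e i) \<le> real (card (E \<inter> {1,a2})) * (tau (Suc e) - tau (Suc es))"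
      proof (rule sum_bounded_above)
        fix i assume i: "i \<in> E \<inter> {1,a2}"
        show "g x e i \<le> tau (Suc e) - tau (Suc es)"
          by (rule g_le2) (use i \<open>es < e\<close> xe(1) tpo in \<open>auto simp: E_def\<close>)
      qed
      also have "\<dots> \<le> 2 * (tau (Suc e) - tau (Suc es))"
      proof -
        have "card (E \<inter> {1,a2}) \<le> card {1,a2}" by (rule card_mono) auto
        also have "card {1,a2} \<le> (2::nat)" by (simp add: card_insert_if)
        finally show ?thesis using dpos by (intro mult_right_mono) auto
      qed
      finally have "1 \<le> 3 * tau (Suc e) - 2 * tau (Suc es)" by simp
      then show False using half te tx T_bounds ts by simp
    qed
  qed
qed

end

theorem lemma4:
  fixes n m k :: nat and Items :: "'a set" and P :: "nat \<Rightarrow> 'a list"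
    and ostar :: 'a and a2 :: nat and T t1 t2 :: real
  assumes fin: "finite Items" and card_items: "card Items = m" and mn: "m \<le> n"
    and prefs: "\<forall>i \<in> {1..n}. strict_order_on Items (P i)"
    and k: "1 \<le> k" "k \<le> m"
    and T_def: "T = Max (exh_time {1..n} P Items ` set (take k (P 1)))"
    and T_bounds: "1/2 \<le> T" "T < 2/3"
    and ostar_in: "ostar \<in> set (take k (P 1))"
    and pos: "eats_some {1..n} P Items 1 ostar"
    and a2: "a2 \<noteq> 1"
    and eaters: "eaters_at_exh {1..n} P Items ostar = {1, a2}"
    and t1_def: "t1 = start_time {1..n} P Items 1 ostar"
    and t2_def: "t1 + t2 = exh_time {1..n} P Items ostar"
  shows "\<forall>x \<in> Items. t1 + t2 < exh_time {1..n} P Items x \<and> exh_time {1..n} P Items x \<le> T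
           \<longrightarrow> card (eaters_at_exh {1..n} P Items x - {1, a2}) \<ge> 2"
proof -
  have sub: "eaters_at_exh {1..n} P Items y \<subseteq> {1..n}" for y by (auto simp: eaters_at_exh_def)
  have A1: "(1::nat) \<in> {1..n}" using sub[of ostar] eaters by auto
  have L: "psl {1..n} P Items"
    using fin prefs A1 by unfold_locales auto
  have I1: "set (P 1) = Items" using prefs A1 by (auto simp: strict_order_on_def)
  have oI: "ostar \<in> Items" using ostar_in I1 in_set_takeD by fastforce
  show ?thesis by (rule psl.main_loc[OF L eaters oI t2_def T_bounds(2)])
qed

end
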